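(* Let $d\ge2$ be an integer and $\delta\in(0,d]$ real. Let $P$ be a set of $n$ points in $\mathbb{R}^d$ with $\dim_{\mathsf f}(P)=\delta$ and let $D=\{\mathrm{ball}(x,1):x\in P\}$. Let $D'\subseteq D$ consist of $k$ pairwise disjoint balls. Then there exist $c\in\mathbb{R}^d$ and $r>0$ such that at most $H$ balls of $D'$ intersect $\mathrm{sphere}(c,r)$, and at most $(1-2^{-O(d)})k$ balls of $D'$ are contained in the interior of $\mathrm{sphere}(c,r)$ and at most $(1-2^{-O(d)})k$ in its exterior, where $H=O(k^{1-1/\delta})$ if $\delta>1$ and $H=O(1)$ if $\delta\le1$.
   Context: $\mathrm{ball}(x,r)$ and $\mathrm{sphere}(x,r)$ denote the closed Euclidean ball and the sphere of radius $r$ centered at $x$. Fractal dimension: for a family of finite pointsets $P\subseteq\mathbb{R}^d$ (with $|P|$ unbounded), $\dim_{\mathsf f}(P)$ is the infimum of $\delta$ such that there is a constant $c_0$ with: for every member $P$, every $\varepsilon>0$, every $r\ge2\varepsilon$, every $\varepsilon$-net $N$ of $P$ (a subset of $P$ whose points are pairwise at distance $\ge\varepsilon$ and such that every point of $P$ is within distance $\varepsilon$ of $N$) and every $x$, $|N\cap\mathrm{ball}(x,r)|\le c_0(r/\varepsilon)^\delta$. Hidden constants may depend on $d,\delta,c_0$. *)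

theory Defs
  imports Complex_Main
begin

text \<open>Points of R^d are modelled as functions nat => real vanishing outside {..<d},
  so that the dimension d can be quantified inside the statement.\<close>

definition Rd :: "nat \<Rightarrow> (nat \<Rightarrow> real) set" where
  "Rd d = {x. \<forall>i\<ge>d. x i = 0}"

definition edist :: "nat \<Rightarrow> (nat \<Rightarrow> real) \<Rightarrow> (nat \<Rightarrow> real) \<Rightarrow> real" where
  "edist d x y = sqrt (\<Sum>i<d. (x i - y i)^2)"

definition eball :: "nat \<Rightarrow> (nat \<Rightarrow> real) \<Rightarrow> real \<Rightarrow> (nat \<Rightarrow> real) set" where
  "eball d x r = {y \<in> Rd d. edist d x y \<le> r}"

definition esphere :: "nat \<Rightarrow> (nat \<Rightarrow> real) \<Rightarrow> real \<Rightarrow> (nat \<Rightarrow> real) set" where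
  "esphere d x r = {y \<in> Rd d. edist d x y = r}"

definition is_net :: "nat \<Rightarrow> real \<Rightarrow> (nat \<Rightarrow> real) set \<Rightarrow> (nat \<Rightarrow> real) set \<Rightarrow> bool" where
  "is_net d eps N P \<longleftrightarrow> N \<subseteq> P \<and>
     (\<forall>p\<in>N. \<forall>q\<in>N. p \<noteq> q \<longrightarrow> edist d p q \<ge> eps) \<and>
     (\<forall>p\<in>P. \<exists>q\<in>N. edist d p q \<le> eps)"

definition frac_dim_bound :: "nat \<Rightarrow> real \<Rightarrow> real \<Rightarrow> (nat \<Rightarrow> real) set \<Rightarrow> bool" where
  "frac_dim_bound d \<delta> c0 P \<longleftrightarrow>
     (\<forall>eps r N x. eps > 0 \<longrightarrow> r \<ge> 2 * eps \<longrightarrow> is_net d eps N P \<longrightarrow> x \<in> Rd d \<longrightarrow>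
        real (card (N \<inter> eball d x r)) \<le> c0 * (r / eps) powr \<delta>)"

end

theory Submission
  imports Defs "HOL-Analysis.Ball_Volume"
begin


lemma edist_L2: "edist d x y = L2_set (\<lambda>i. x i - y i) {..<d}"
  by (simp add: edist_def L2_set_def)

lemma edist_nonneg[simp]: "0 \<le> edist d x y"
  by (simp add: edist_def sum_nonneg)

lemma edist_commute: "edist d x y = edist d y x"
  unfolding edist_def by (simp add: power2_commute)

lemma edist_self[simp]: "edist d x x = 0"
  unfolding edist_def by simp

lemma edist_triangle: "edist d x z \<le> edist d x y + edist d y z"
proof -
  have "edist d x z = L2_set (\<lambda>i. (x i - y i) + (y i - z i)) {..<d}"
    by (simp add: edist_L2)
  also have "\<dots> \<le> L2_set (\<lambda>i. x i - y i) {..<d} + L2_set (\<lambda>i. y i - z i) {..<d}"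
    by (rule L2_set_triangle_ineq)
  finally show ?thesis by (simp add: edist_L2)
qed

lemma self_in_eball: "x \<in> Rd d \<Longrightarrow> x \<in> eball d x 1"
  by (simp add: eball_def)

lemma disjoint_far:
  assumes "x \<in> Rd d" "y \<in> Rd d" "eball d x 1 \<inter> eball d y 1 = {}"
  shows "edist d x y > 2"
proof (rule ccontr)
  assume "\<not> ?thesis"
  define z where "z = (\<lambda>i. (x i + y i) / 2)"
  have zR: "z \<in> Rd d" using assms by (simp add: Rd_def z_def)
  have s4: "sqrt (4::real) = 2" by (rule real_sqrt_unique) auto
  have h1: "(\<Sum>i<d. (x i - z i)^2) = (\<Sum>i<d. (x i - y i)^2) / 4"
    by (simp add: z_def sum_divide_distrib[symmetric] power2_eq_square field_simps)
  have 1: "edist d x z = edist d x y / 2"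
    unfolding edist_def h1 by (simp add: real_sqrt_divide s4)
  have h2: "(\<Sum>i<d. (y i - z i)^2) = (\<Sum>i<d. (x i - y i)^2) / 4"
    by (simp add: z_def sum_divide_distrib[symmetric] power2_eq_square field_simps)
  have 2: "edist d y z = edist d x y / 2"
    unfolding edist_def h2 by (simp add: real_sqrt_divide s4)
  have "z \<in> eball d x 1" "z \<in> eball d y 1"
    using 1 2 zR \<open>\<not> _\<close> by (auto simp: eball_def)
  thus False using assms(3) by blast
qed

lemma PiM_shift:
  fixes t :: "nat \<Rightarrow> real"
  assumes "finite I"
  shows "distr (PiM I (\<lambda>_. lborel)) (PiM I (\<lambda>_. lborel)) (\<lambda>f. \<lambda>i\<in>I. f i - t i) = PiM I (\<lambda>_. lborel)"
proof -
  interpret product_sigma_finite "\<lambda>_::nat. lborel :: real measure" by standard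
  have meas: "(\<lambda>f. \<lambda>i\<in>I. f i - t i) \<in> measurable (PiM I (\<lambda>_. lborel)) (PiM I (\<lambda>_. lborel :: real measure))"
    by measurable
  show ?thesis
  proof (rule PiM_eqI)
    show "finite I" by fact
    show "sets (distr (PiM I (\<lambda>_. lborel)) (PiM I (\<lambda>_. lborel)) (\<lambda>f. \<lambda>i\<in>I. f i - t i)) = sets (PiM I (\<lambda>_. lborel))"
      by simp
  next
    fix A assume A: "\<And>i. i \<in> I \<Longrightarrow> A i \<in> sets (lborel :: real measure)"
    have pre: "(\<lambda>f. \<lambda>i\<in>I. f i - t i) -` PiE I A \<inter> space (PiM I (\<lambda>_. lborel)) = PiE I (\<lambda>i. (\<lambda>x. x - t i) -` A i)"
      by (auto simp: space_PiM PiE_iff extensional_def)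
    have each: "emeasure lborel ((\<lambda>x. x - t i) -` A i) = emeasure lborel (A i)" if "i \<in> I" for i
    proof -
      have "emeasure lborel (A i) = emeasure (distr lborel borel ((+) (- t i))) (A i)"
        by (simp add: lborel_distr_plus)
      also have "\<dots> = emeasure lborel ((+) (- t i) -` A i \<inter> space lborel)"
        using A[OF that] by (subst emeasure_distr) auto
      also have "(+) (- t i) -` A i \<inter> space lborel = (\<lambda>x. x - t i) -` A i"
        by auto
      finally show ?thesis ..
    qed
    have ms: "(\<lambda>x. x - t i) -` A i \<in> sets lborel" if "i \<in> I" for i
    proof -
      have "(\<lambda>x. x - t i) -` A i \<inter> space lborel \<in> sets lborel"
        using A[OF that] by (intro measurable_sets[of _ lborel borel]) auto
      thus ?thesis by simp
    qed
    show "emeasure (distr (PiM I (\<lambda>_. lborel)) (PiM I (\<lambda>_. lborel)) (\<lambda>f. \<lambda>i\<in>I. f i - t i)) (PiE I A) = (\<Prod>i\<in>I. emeasure lborel (A i))"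
      using A ms each \<open>finite I\<close>
      by (subst emeasure_distr[OF meas]) (auto simp: pre emeasure_PiM sets_PiM_I_finite intro!: prod.cong)
  qed
qed

lemma ball_vol:
  assumes "\<rho> > 0"
  shows "emeasure (PiM {..<d} (\<lambda>_. lborel)) {f \<in> space (PiM {..<d} (\<lambda>_. lborel)). edist d t f \<le> \<rho>}
    = ennreal (unit_ball_vol d * \<rho>^d)"
proof -
  let ?M = "PiM {..<d} (\<lambda>_. lborel :: real measure)"
  let ?g = "\<lambda>f. \<lambda>i\<in>{..<d}. f i - t i"
  have meas: "?g \<in> measurable ?M ?M" by measurable
  have X: "{f. sqrt (\<Sum>i\<in>{..<d}. (f i)^2) \<le> \<rho>} \<inter> space ?M \<in> sets ?M" by measurable
  have "emeasure ?M ({f. sqrt (\<Sum>i\<in>{..<d}. (f i)^2) \<le> \<rho>} \<inter> space ?M) = ennreal (unit_ball_vol d * \<rho>^d)"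
    using emeasure_cball_aux[of "{..<d}" \<rho>] assms by simp
  also have "emeasure ?M ({f. sqrt (\<Sum>i\<in>{..<d}. (f i)^2) \<le> \<rho>} \<inter> space ?M)
     = emeasure (distr ?M ?M ?g) ({f. sqrt (\<Sum>i\<in>{..<d}. (f i)^2) \<le> \<rho>} \<inter> space ?M)"
    by (simp add: PiM_shift)
  also have "\<dots> = emeasure ?M (?g -` ({f. sqrt (\<Sum>i\<in>{..<d}. (f i)^2) \<le> \<rho>} \<inter> space ?M) \<inter> space ?M)"
    by (rule emeasure_distr[OF meas X])
  also have "?g -` ({f. sqrt (\<Sum>i\<in>{..<d}. (f i)^2) \<le> \<rho>} \<inter> space ?M) \<inter> space ?M
      = {f \<in> space ?M. edist d t f \<le> \<rho>}"
  proof -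
    have "(\<Sum>i\<in>{..<d}. (restrict (\<lambda>i. f i - t i) {..<d} i)^2) = (\<Sum>i<d. (t i - f i)^2)" for f
      by (rule sum.cong) (auto simp: power2_commute)
    thus ?thesis by (auto simp: edist_def space_PiM)
  qed
  finally show ?thesis by simp
qed

lemma packing:
  assumes "finite T" "\<forall>t\<in>T. edist d c t \<le> R" "\<forall>t\<in>T. \<forall>t'\<in>T. t \<noteq> t' \<longrightarrow> edist d t t' \<ge> s"
    "s > 0" "R \<ge> 0"
  shows "real (card T) * (s/3)^d \<le> (R + s/3)^d"
proof -
  let ?M = "PiM {..<d} (\<lambda>_. lborel :: real measure)"
  define bl where "bl t \<rho> = {f \<in> space ?M. edist d t f \<le> \<rho>}" for t \<rho>
  define V where "V = unit_ball_vol (real d)"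
  have Vpos: "V > 0" by (simp add: V_def)
  have sets: "bl t \<rho> \<in> sets ?M" for t \<rho>
    unfolding bl_def edist_def by measurable
  have disj: "disjoint_family_on (\<lambda>t. bl t (s/3)) T"
  proof (auto simp: disjoint_family_on_def)
    fix t t' f assume tt: "t \<in> T" "t' \<in> T" "t \<noteq> t'" and f: "f \<in> bl t (s/3)" "f \<in> bl t' (s/3)"
    have "edist d t t' \<le> edist d t f + edist d f t'" by (rule edist_triangle)
    also have "\<dots> \<le> s/3 + s/3" using f by (auto simp: bl_def edist_commute[of d f t'])
    finally show False using assms(3,4) tt by force
  qed
  have sub: "(\<Union>t\<in>T. bl t (s/3)) \<subseteq> bl c (R + s/3)"
  proof
    fix f assume "f \<in> (\<Union>t\<in>T. bl t (s/3))"
    then obtain t where t: "t \<in> T" "f \<in> bl t (s/3)" by auto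
    have "edist d c f \<le> edist d c t + edist d t f" by (rule edist_triangle)
    also have "\<dots> \<le> R + s/3" using t assms(2) by (auto simp: bl_def intro: add_mono)
    finally show "f \<in> bl c (R + s/3)" using t by (auto simp: bl_def)
  qed
  have "(\<Sum>t\<in>T. emeasure ?M (bl t (s/3))) = emeasure ?M (\<Union>t\<in>T. bl t (s/3))"
    using sets disj assms(1) by (intro sum_emeasure) auto
  also have "\<dots> \<le> emeasure ?M (bl c (R + s/3))"
    using sub sets by (intro emeasure_mono) auto
  finally have le: "(\<Sum>t\<in>T. emeasure ?M (bl t (s/3))) \<le> emeasure ?M (bl c (R + s/3))" .
  have e1: "emeasure ?M (bl t (s/3)) = ennreal (V * (s/3)^d)" for t
    unfolding bl_def V_def using assms(4) by (intro ball_vol) auto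
  have e2: "emeasure ?M (bl c (R + s/3)) = ennreal (V * (R + s/3)^d)"
    unfolding bl_def V_def using assms(4,5) by (intro ball_vol) auto
  have "ennreal (real (card T) * (V * (s/3)^d)) \<le> ennreal (V * (R + s/3)^d)"
    using le by (simp add: e1 e2 ennreal_mult' ennreal_of_nat_eq_real_of_nat)
  hence "real (card T) * (V * (s/3)^d) \<le> V * (R + s/3)^d"
    using Vpos assms(4,5) by (subst (asm) ennreal_le_iff) auto
  hence "V * (real (card T) * (s/3)^d) \<le> V * (R + s/3)^d" by (simp add: algebra_simps)
  thus ?thesis using Vpos by simp
qed



lemma exists_max_card:
  assumes "finite P" "X \<in> F" "\<forall>U\<in>F. U \<subseteq> P"
  shows "\<exists>U\<in>F. \<forall>V\<in>F. card V \<le> card U"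
proof -
  have "\<forall>U. U \<in> F \<longrightarrow> card U < card P + 1"
  proof (intro allI impI)
    fix U assume "U \<in> F"
    hence "card U \<le> card P" using assms(1,3) by (intro card_mono) auto
    thus "card U < card P + 1" by simp
  qed
  from ex_has_greatest_nat[of "\<lambda>U. U \<in> F" X card "card P + 1", OF assms(2) this]
  show ?thesis by blast
qed

lemma net_extend:
  assumes "finite P" "Q \<subseteq> P" "\<forall>x\<in>Q. \<forall>y\<in>Q. x \<noteq> y \<longrightarrow> edist d x y \<ge> 2"
  shows "\<exists>N. is_net d 2 N P \<and> Q \<subseteq> N"
proof -
  define F where "F = {U. Q \<subseteq> U \<and> U \<subseteq> P \<and> (\<forall>x\<in>U. \<forall>y\<in>U. x \<noteq> y \<longrightarrow> edist d x y \<ge> 2)}"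
  have "Q \<in> F" using assms by (auto simp: F_def)
  have "\<exists>U\<in>F. \<forall>V\<in>F. card V \<le> card U"
    by (rule exists_max_card[OF assms(1) \<open>Q \<in> F\<close>]) (simp add: F_def)
  then obtain U where U: "U \<in> F" and mx: "\<forall>V\<in>F. card V \<le> card U" by blast
  have finU: "finite U" using U assms(1) by (auto simp: F_def intro: finite_subset)
  have cov: "\<exists>q\<in>U. edist d p q \<le> 2" if p: "p \<in> P" for p
  proof (rule ccontr)
    assume nc: "\<not> ?thesis"
    hence pU: "p \<notin> U" using edist_self[of d p] by force
    have a: "\<forall>q\<in>U. edist d p q \<ge> 2" using nc by force
    have b: "\<forall>q\<in>U. edist d q p \<ge> 2" using a edist_commute by metis
    have "insert p U \<in> F" using U p a b unfolding F_def by blast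
    hence "card (insert p U) \<le> card U" using mx by blast
    thus False using pU finU by simp
  qed
  have UF: "Q \<subseteq> U" "U \<subseteq> P" "\<forall>x\<in>U. \<forall>y\<in>U. x \<noteq> y \<longrightarrow> edist d x y \<ge> 2"
    using U by (simp_all add: F_def)
  have "is_net d 2 U P" unfolding is_net_def
    by (intro conjI) (fact UF(2), fact UF(3), use cov in blast)
  thus ?thesis using UF by blast
qed

lemma sep_cover:
  assumes "finite X" "s > 0"
  shows "\<exists>T \<subseteq> X. (\<forall>t\<in>T. \<forall>t'\<in>T. t \<noteq> t' \<longrightarrow> edist d t t' \<ge> s) \<and> (\<forall>x\<in>X. \<exists>t\<in>T. edist d t x < s)"
proof -
  define F where "F = {U. U \<subseteq> X \<and> (\<forall>x\<in>U. \<forall>y\<in>U. x \<noteq> y \<longrightarrow> edist d x y \<ge> s)}"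
  have "{} \<in> F" by (auto simp: F_def)
  have "\<exists>U\<in>F. \<forall>V\<in>F. card V \<le> card U"
    by (rule exists_max_card[OF assms(1) \<open>{} \<in> F\<close>]) (simp add: F_def)
  then obtain U where U: "U \<in> F" and mx: "\<forall>V\<in>F. card V \<le> card U" by blast
  have finU: "finite U" using U assms(1) by (auto simp: F_def intro: finite_subset)
  have cov: "\<exists>t\<in>U. edist d t x < s" if p: "x \<in> X" for x
  proof (rule ccontr)
    assume nc: "\<not> ?thesis"
    show False
    proof (cases "x \<in> U")
      case True
      have "edist d x x < s" using assms(2) by simp
      then show False using nc True by blast
    next
      case pU: False
      have a: "\<forall>q\<in>U. edist d q x \<ge> s" using nc by force
      have b: "\<forall>q\<in>U. edist d x q \<ge> s" using a edist_commute by metis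
      have "insert x U \<in> F" using U p a b unfolding F_def by blast
      hence "card (insert x U) \<le> card U" using mx by blast
      thus False using pU finU by simp
    qed
  qed
  have UF: "U \<subseteq> X" "\<forall>x\<in>U. \<forall>y\<in>U. x \<noteq> y \<longrightarrow> edist d x y \<ge> s"
    using U by (simp_all add: F_def)
  show ?thesis
    by (intro exI[of _ U] conjI) (fact UF(1), fact UF(2), use cov in blast)
qed

lemma frac_use:
  assumes "frac_dim_bound d \<delta> c0 P" "finite P" "P \<subseteq> Rd d" "Q \<subseteq> P"
    "\<forall>x\<in>Q. \<forall>y\<in>Q. x \<noteq> y \<longrightarrow> edist d x y \<ge> 2" "x \<in> Rd d" "r \<ge> 4"
  shows "real (card {q\<in>Q. edist d x q \<le> r}) \<le> c0 * (r/2) powr \<delta>"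
proof -
  obtain N where N: "is_net d 2 N P" "Q \<subseteq> N" using net_extend[OF assms(2,4,5)] by blast
  have finN: "finite N" using N assms(2) by (auto simp: is_net_def intro: finite_subset)
  have "{q\<in>Q. edist d x q \<le> r} \<subseteq> N \<inter> eball d x r"
    using N assms(3,4) by (auto simp: eball_def)
  hence "card {q\<in>Q. edist d x q \<le> r} \<le> card (N \<inter> eball d x r)"
    using finN by (intro card_mono) auto
  also have "real (card (N \<inter> eball d x r)) \<le> c0 * (r/2) powr \<delta>"
    using assms(1,6,7) N(1) unfolding frac_dim_bound_def by auto
  finally show ?thesis by simp
qed



lemma far_point:
  assumes "finite Q" "Q \<noteq> {}"
  shows "\<exists>q'\<in>Q. \<forall>x\<in>Q. edist d q x \<le> edist d q q'"
proof -
  let ?v = "Max (edist d q ` Q)"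
  have "?v \<in> edist d q ` Q" using assms by (intro Max_in) auto
  then obtain q' where "q' \<in> Q" "edist d q q' = ?v" by auto
  moreover have "\<forall>x\<in>Q. edist d q x \<le> ?v" using assms by auto
  ultimately show ?thesis by metis
qed

lemma geo1:
  assumes finQ: "finite Q" and m2: "1 \<le> m" and mk: "m \<le> card Q"
  shows "\<exists>c\<in>Q. \<exists>r0. m \<le> card {x\<in>Q. edist d c x \<le> r0} \<and>
     (\<forall>q\<in>Q. \<forall>r<r0. card {x\<in>Q. edist d q x \<le> r} < m)"
proof -
  define S where "S q r = {x\<in>Q. edist d q x \<le> r}" for q r
  define G where "G = {p \<in> Q \<times> Q. m \<le> card (S (fst p) (edist d (fst p) (snd p)))}"
  have Qne: "Q \<noteq> {}" using mk m2 by auto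
  then obtain q0 where q0: "q0 \<in> Q" by auto
  obtain q' where q': "q' \<in> Q" "\<forall>x\<in>Q. edist d q0 x \<le> edist d q0 q'"
    using far_point[OF finQ Qne] by blast
  have "S q0 (edist d q0 q') = Q" using q' by (auto simp: S_def)
  hence "(q0, q') \<in> G" using q0 q' mk by (simp add: G_def)
  hence Gne: "G \<noteq> {}" by auto
  have finG: "finite G" using finQ by (auto simp: G_def intro: finite_subset[of _ "Q \<times> Q"])
  define r0 where "r0 = Min ((\<lambda>p. edist d (fst p) (snd p)) ` G)"
  have "r0 \<in> (\<lambda>p. edist d (fst p) (snd p)) ` G" unfolding r0_def using finG Gne by (intro Min_in) auto
  then obtain c q1 where cq: "(c, q1) \<in> G" "r0 = edist d c q1" by auto
  have minr: "r0 \<le> edist d (fst p) (snd p)" if "p \<in> G" for p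
    unfolding r0_def using finG that by (intro Min_le) auto
  have MIN: "card (S q r) < m" if q: "q \<in> Q" and r: "r < r0" for q r
  proof (rule ccontr)
    assume "\<not> ?thesis"
    hence big: "m \<le> card (S q r)" by simp
    have finS: "finite (S q r)" using finQ by (simp add: S_def)
    have ne: "S q r \<noteq> {}" using big m2 by auto
    obtain q' where q': "q' \<in> S q r" "\<forall>x\<in>S q r. edist d q x \<le> edist d q q'"
      using far_point[OF finS ne] by blast
    have "S q (edist d q q') = S q r" using q' by (auto simp: S_def)
    hence "(q, q') \<in> G" using q q' big by (simp add: G_def S_def)
    hence "r0 \<le> edist d q q'" using minr by fastforce
    moreover have "edist d q q' \<le> r" using q' by (simp add: S_def)
    ultimately show False using r by simp
  qed
  have "c \<in> Q" "m \<le> card (S c r0)" using cq by (auto simp: G_def)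
  thus ?thesis using MIN unfolding S_def by blast
qed

lemma geo2:
  assumes finQ: "finite Q" and m1: "1 \<le> m"
    and MIN: "\<forall>q\<in>Q. \<forall>r<r0. card {x\<in>Q. edist d q x \<le> r} < m" and r0: "r0 > 2"
  shows "real (card {x\<in>Q. edist d c x \<le> 2*r0+1}) \<le> 16^d * (real m - 1)"
proof -
  define S where "S q r = {x\<in>Q. edist d q x \<le> r}" for q r
  define R where "R = 2*r0+1"
  define X where "X = S c R"
  have finX: "finite X" using finQ by (simp add: X_def S_def)
  obtain T where T: "T \<subseteq> X" "\<forall>t\<in>T. \<forall>t'\<in>T. t \<noteq> t' \<longrightarrow> edist d t t' \<ge> r0/2"
     "\<forall>x\<in>X. \<exists>t\<in>T. edist d t x < r0/2"
    using sep_cover[OF finX, of "r0/2" d] r0 by auto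
  have finT: "finite T" using T(1) finX by (rule finite_subset)
  have TQ: "T \<subseteq> Q" using T(1) by (auto simp: X_def S_def)
  have "real (card T) * (r0/2/3)^d \<le> (R + r0/2/3)^d"
    using T(1,2) finT r0 by (intro packing) (auto simp: X_def S_def R_def)
  also have "\<dots> \<le> (16 * (r0/2/3))^d"
    using r0 by (intro power_mono) (auto simp: R_def)
  also have "\<dots> = 16^d * (r0/2/3)^d" by (rule power_mult_distrib)
  finally have cT: "real (card T) \<le> 16^d"
    using r0 by (simp add: mult_le_cancel_right)
  have "X \<subseteq> (\<Union>t\<in>T. S t (r0/2))"
  proof
    fix x assume x: "x \<in> X"
    then obtain t where "t \<in> T" "edist d t x < r0/2" using T(3) by blast
    thus "x \<in> (\<Union>t\<in>T. S t (r0/2))" using x unfolding X_def S_def by force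
  qed
  hence "card X \<le> card (\<Union>t\<in>T. S t (r0/2))"
    using finT finQ by (intro card_mono) (auto simp: S_def)
  also have "\<dots> \<le> (\<Sum>t\<in>T. card (S t (r0/2)))" using finT by (rule card_UN_le)
  also have "\<dots> \<le> (\<Sum>t\<in>T. (m - 1))"
  proof (rule sum_mono)
    fix t assume "t \<in> T"
    hence tQ: "t \<in> Q" using TQ by blast
    have "r0/2 < r0" using r0 by simp
    hence "card (S t (r0/2)) < m" using MIN tQ unfolding S_def by blast
    thus "card (S t (r0/2)) \<le> m - 1" by simp
  qed
  also have "\<dots> = card T * (m - 1)" by simp
  finally have "real (card X) \<le> real (card T) * real (m - 1)"
    by (metis of_nat_le_iff of_nat_mult)
  also have "\<dots> \<le> 16^d * real (m - 1)"
    by (intro mult_right_mono cT) auto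
  also have "real (m - 1) = real m - 1" using m1 by simp
  finally show ?thesis by (simp add: X_def S_def R_def)
qed

lemma geo3:
  assumes finQ: "finite Q" and r0: "r0 > 2"
  shows "\<exists>r. r0 \<le> r \<and> r \<le> 2*r0 \<and>
    real (card {x\<in>Q. \<bar>edist d c x - r\<bar> \<le> 1}) * (real (nat \<lfloor>r0/3\<rfloor>) + 1)
      \<le> real (card {x\<in>Q. edist d c x \<le> 2*r0+1})"
proof -
  define J where "J = nat \<lfloor>r0/3\<rfloor> + 1"
  define M where "M = card {x\<in>Q. edist d c x \<le> 2*r0+1}"
  define H where "H j = {x\<in>Q. \<bar>edist d c x - (r0 + 3 * real j)\<bar> \<le> 1}" for j
  have Jle: "3 * real (nat \<lfloor>r0/3\<rfloor>) \<le> r0"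
  proof -
    have "real_of_int \<lfloor>r0/3\<rfloor> \<le> r0/3" by linarith
    moreover have "real (nat \<lfloor>r0/3\<rfloor>) = real_of_int \<lfloor>r0/3\<rfloor>" using r0 by simp
    ultimately show ?thesis by simp
  qed
  have radle: "r0 + 3 * real j \<le> 2*r0" if "j < J" for j
  proof -
    have "j \<le> nat \<lfloor>r0/3\<rfloor>" using that by (simp add: J_def)
    hence "real j \<le> real (nat \<lfloor>r0/3\<rfloor>)" by simp
    thus ?thesis using Jle by simp
  qed
  have Hsub: "H j \<subseteq> {x\<in>Q. edist d c x \<le> 2*r0+1}" if "j < J" for j
    using radle[OF that] by (auto simp: H_def)
  have disj: "\<forall>i\<in>{..<J}. \<forall>j\<in>{..<J}. i \<noteq> j \<longrightarrow> H i \<inter> H j = {}"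
  proof (intro ballI impI)
    fix i j :: nat assume "i \<noteq> j"
    hence "\<bar>real i - real j\<bar> \<ge> 1" by (cases "i < j") auto
    thus "H i \<inter> H j = {}" by (auto simp: H_def)
  qed
  have "(\<Sum>j<J. card (H j)) = card (\<Union>(H ` {..<J}))"
    using finQ disj by (intro card_UN_disjoint[symmetric]) (auto simp: H_def)
  also have "\<dots> \<le> M" unfolding M_def using finQ Hsub by (intro card_mono) auto
  finally have sumle: "(\<Sum>j<J. real (card (H j))) \<le> real M"
    by (metis of_nat_le_iff of_nat_sum)
  have "\<exists>j<J. real (card (H j)) * real J \<le> real M"
  proof (rule ccontr)
    assume "\<not> ?thesis"
    hence lt: "\<forall>j<J. real M < real (card (H j)) * real J" by auto
    have "(\<Sum>j<J. real M) < (\<Sum>j<J. real (card (H j)) * real J)"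
      using lt by (intro sum_strict_mono) (auto simp: J_def)
    also have "\<dots> = (\<Sum>j<J. real (card (H j))) * real J" by (simp add: sum_distrib_right)
    also have "\<dots> \<le> real M * real J" using sumle by (intro mult_right_mono) auto
    finally show False by (simp add: mult.commute)
  qed
  then obtain j where j: "j < J" "real (card (H j)) * real J \<le> real M" by blast
  show ?thesis
    using j radle[OF j(1)] by (intro exI[of _ "r0 + 3 * real j"]) (auto simp: H_def J_def M_def add.commute)
qed



lemma small_case:
  assumes finQ: "finite Q" and QR: "Q \<subseteq> Rd d" and d0: "0 < d" and q: "q \<in> Q"
  shows "\<exists>c\<in>Rd d. \<exists>r>0. card {x\<in>Q. eball d x 1 \<inter> esphere d c r \<noteq> {}} \<le> card Q \<and>
     card {x\<in>Q. eball d x 1 \<subseteq> {y\<in>Rd d. edist d c y < r}} \<le> card Q - 1 \<and>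
     card {x\<in>Q. eball d x 1 \<subseteq> {y\<in>Rd d. edist d c y > r}} \<le> card Q - 1"
proof -
  have qR: "q \<in> Rd d" using q QR by blast
  define e where "e = q(0 := q 0 + 1)"
  have eR: "e \<in> Rd d" using qR d0 by (auto simp: Rd_def e_def)
  have "(\<Sum>i<d. (q i - e i)^2) = (\<Sum>i<d. if i = 0 then 1 else 0)"
    by (rule sum.cong) (auto simp: e_def)
  also have "\<dots> = 1" using d0 by simp
  finally have ed: "edist d q e = 1" by (simp add: edist_def)
  have eb: "e \<in> eball d q 1" using eR ed by (simp add: eball_def)
  have sub1: "{x\<in>Q. eball d x 1 \<subseteq> {y\<in>Rd d. edist d q y < 1/2}} \<subseteq> Q - {q}"
    using eb ed by auto
  have sub2: "{x\<in>Q. eball d x 1 \<subseteq> {y\<in>Rd d. edist d q y > 1/2}} \<subseteq> Q - {q}"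
    using self_in_eball[OF qR] by auto
  have c1: "card {x\<in>Q. eball d x 1 \<subseteq> {y\<in>Rd d. edist d q y < 1/2}} \<le> card Q - 1"
    using card_mono[OF _ sub1] finQ q by (simp add: card_Diff_singleton)
  have c2: "card {x\<in>Q. eball d x 1 \<subseteq> {y\<in>Rd d. edist d q y > 1/2}} \<le> card Q - 1"
    using card_mono[OF _ sub2] finQ q by (simp add: card_Diff_singleton)
  have c0: "card {x\<in>Q. eball d x 1 \<inter> esphere d q (1/2) \<noteq> {}} \<le> card Q"
    using finQ by (intro card_mono) auto
  show ?thesis using qR c0 c1 c2 by (intro bexI[of _ q] exI[of _ "1/2"]) auto
qed

lemma big_case:
  assumes d2: "2 \<le> d" and dpos: "0 < \<delta>" and finP: "finite P" and PR: "P \<subseteq> Rd d"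
    and fd: "frac_dim_bound d \<delta> c0 P" and QP: "Q \<subseteq> P"
    and sep: "\<forall>x\<in>Q. \<forall>y\<in>Q. x \<noteq> y \<longrightarrow> edist d x y > 2"
    and kK: "real (card Q) > 64^d"
  shows "\<exists>c\<in>Rd d. \<exists>r>0.
     real (card {x\<in>Q. eball d x 1 \<inter> esphere d c r \<noteq> {}})
        \<le> (if \<delta> > 1 then (2 * (2 * 16^d * \<bar>c0\<bar>) powr (1/\<delta>)) * real (card Q) powr (1 - 1/\<delta>)
            else 4 * \<bar>c0\<bar>) \<and>
     real (card {x\<in>Q. eball d x 1 \<subseteq> {y\<in>Rd d. edist d c y < r}}) \<le> (1 - 1/64^d) * real (card Q) \<and>
     real (card {x\<in>Q. eball d x 1 \<subseteq> {y\<in>Rd d. edist d c y > r}}) \<le> (1 - 1/64^d) * real (card Q)"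
proof -
  define k where "k = card Q"
  define K :: real where "K = 64^d"
  define B :: real where "B = 16^d"
  define S where "S q r = {x\<in>Q. edist d q x \<le> r}" for q r
  have finQ: "finite Q" using finP QP by (rule finite_subset[rotated])
  have QR: "Q \<subseteq> Rd d" using QP PR by blast
  have sep2: "\<forall>x\<in>Q. \<forall>y\<in>Q. x \<noteq> y \<longrightarrow> edist d x y \<ge> 2" using sep by force
  have B1: "B \<ge> 1" by (simp add: B_def)
  have KB: "K \<ge> 16 * B"
  proof -
    have "(4::real)^d \<ge> 4^2" using d2 by (intro power_increasing) auto
    hence "(4::real)^d * 16^d \<ge> 16 * 16^d" by simp
    moreover have "(64::real)^d = 4^d * 16^d" by (simp add: power_mult_distrib[symmetric])
    ultimately show ?thesis by (simp add: K_def B_def)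
  qed
  have kK': "real k > K" using kK by (simp add: k_def K_def)
  define m where "m = nat \<lceil>real k / (2*B)\<rceil>"
  have m1: "real m \<ge> real k / (2*B)" unfolding m_def by linarith
  have m2: "real m < real k / (2*B) + 1" unfolding m_def
    using B1 by (simp add: of_nat_nat) linarith
  have k8: "real k / (2*B) \<ge> 8"
  proof -
    have "16 * B < real k" using KB kK' by linarith
    thus ?thesis using B1 by (simp add: field_simps)
  qed
  have mge2: "2 \<le> m" using m1 k8 by linarith
  have mlek: "m \<le> k"
  proof -
    have "real k / (2*B) \<le> real k / 2" using B1 kK' by (intro divide_left_mono) auto
    hence "real m < real k" using m2 k8 by linarith
    thus ?thesis by simp
  qed
  obtain c r0 where c: "c \<in> Q" and Sc: "m \<le> card (S c r0)"
      and MIN: "\<forall>q\<in>Q. \<forall>r<r0. card {x\<in>Q. edist d q x \<le> r} < m"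
    using geo1[OF finQ _ mlek[unfolded k_def], of d] mge2 unfolding S_def by auto
  have cR: "c \<in> Rd d" using c QR by blast
  have finS: "finite (S q r)" for q r using finQ by (simp add: S_def)
  have r02: "r0 > 2"
  proof -
    have "\<not> S c r0 \<subseteq> {c}"
    proof
      assume "S c r0 \<subseteq> {c}"
      hence "card (S c r0) \<le> 1" using card_mono[of "{c}" "S c r0"] by simp
      thus False using Sc mge2 by simp
    qed
    then obtain x where x: "x \<in> S c r0" "x \<noteq> c" by auto
    hence "edist d c x > 2" using sep c by (auto simp: S_def)
    moreover have "edist d c x \<le> r0" using x by (simp add: S_def)
    ultimately show ?thesis by simp
  qed
  define R where "R = 2*r0+1"
  define M where "M = card (S c R)"
  have Mle: "real M \<le> B * (real m - 1)"
    using geo2[OF finQ _ MIN r02, of c] mge2 by (simp add: M_def S_def R_def B_def)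
  have Mk2: "real M \<le> real k / 2"
  proof -
    have "B * (real m - 1) \<le> B * (real k / (2*B))" using m2 B1 by (intro mult_left_mono) auto
    also have "\<dots> = real k / 2" using B1 by simp
    finally show ?thesis using Mle by simp
  qed
  obtain r where r: "r0 \<le> r" "r \<le> 2*r0"
    and Hr: "real (card {x\<in>Q. \<bar>edist d c x - r\<bar> \<le> 1}) * (real (nat \<lfloor>r0/3\<rfloor>) + 1) \<le> real M"
    using geo3[OF finQ r02, of d c] unfolding M_def S_def R_def by blast
  define J where "J = real (nat \<lfloor>r0/3\<rfloor>) + 1"
  define H where "H = {x\<in>Q. \<bar>edist d c x - r\<bar> \<le> 1}"
  have J1: "J \<ge> 1" by (simp add: J_def)
  have J3: "J \<ge> r0/3"
  proof -
    have "real_of_int \<lfloor>r0/3\<rfloor> > r0/3 - 1" by linarith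
    moreover have "real (nat \<lfloor>r0/3\<rfloor>) = real_of_int \<lfloor>r0/3\<rfloor>" using r02 by simp
    ultimately show ?thesis by (simp add: J_def)
  qed
  have HJ: "real (card H) \<le> real M / J"
    using Hr J1 by (simp add: J_def H_def field_simps)
  have Isub: "{x\<in>Q. eball d x 1 \<inter> esphere d c r \<noteq> {}} \<subseteq> H"
  proof
    fix x assume "x \<in> {x\<in>Q. eball d x 1 \<inter> esphere d c r \<noteq> {}}"
    then obtain y where x: "x \<in> Q" and y: "y \<in> eball d x 1" "y \<in> esphere d c r" by auto
    have xy: "edist d x y \<le> 1" "edist d c y = r" using y by (auto simp: eball_def esphere_def)
    have "edist d c x \<le> edist d c y + edist d y x" by (rule edist_triangle)
    moreover have "edist d c y \<le> edist d c x + edist d x y" by (rule edist_triangle)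
    moreover have "edist d y x = edist d x y" by (rule edist_commute)
    ultimately have "\<bar>edist d c x - r\<bar> \<le> 1" using xy by auto
    thus "x \<in> H" using x by (simp add: H_def)
  qed
  have Insub: "{x\<in>Q. eball d x 1 \<subseteq> {y\<in>Rd d. edist d c y < r}} \<subseteq> S c R"
  proof
    fix x assume x: "x \<in> {x\<in>Q. eball d x 1 \<subseteq> {y\<in>Rd d. edist d c y < r}}"
    hence "x \<in> Rd d" using QR by blast
    hence "edist d c x < r" using x self_in_eball by blast
    thus "x \<in> S c R" using x r by (simp add: S_def R_def)
  qed
  have Outsub: "{x\<in>Q. eball d x 1 \<subseteq> {y\<in>Rd d. edist d c y > r}} \<subseteq> Q - S c r0"
  proof
    fix x assume x: "x \<in> {x\<in>Q. eball d x 1 \<subseteq> {y\<in>Rd d. edist d c y > r}}"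
    hence "x \<in> Rd d" using QR by blast
    hence "edist d c x > r" using x self_in_eball by blast
    thus "x \<in> Q - S c r0" using x r by (auto simp: S_def)
  qed
  have Kpos: "K > 0" by (simp add: K_def)
  have cIn: "real (card {x\<in>Q. eball d x 1 \<subseteq> {y\<in>Rd d. edist d c y < r}}) \<le> (1 - 1/K) * real k"
  proof -
    have "card {x\<in>Q. eball d x 1 \<subseteq> {y\<in>Rd d. edist d c y < r}} \<le> M"
      unfolding M_def using Insub finS by (intro card_mono) auto
    hence "real (card {x\<in>Q. eball d x 1 \<subseteq> {y\<in>Rd d. edist d c y < r}}) \<le> real k / 2"
      using Mk2 by linarith
    also have "\<dots> \<le> (1 - 1/K) * real k"
    proof -
      have "1/K \<le> 1/2" using KB B1 by (intro divide_left_mono) auto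
      hence "1/2 \<le> 1 - 1/K" by simp
      hence "1/2 * real k \<le> (1 - 1/K) * real k" by (rule mult_right_mono) simp
      thus ?thesis by simp
    qed
    finally show ?thesis .
  qed
  have cOut: "real (card {x\<in>Q. eball d x 1 \<subseteq> {y\<in>Rd d. edist d c y > r}}) \<le> (1 - 1/K) * real k"
  proof -
    have "card {x\<in>Q. eball d x 1 \<subseteq> {y\<in>Rd d. edist d c y > r}} \<le> card (Q - S c r0)"
      using Outsub finQ by (intro card_mono) auto
    also have "\<dots> = k - card (S c r0)"
      using finQ by (simp add: k_def card_Diff_subset S_def)
    finally have "card {x\<in>Q. eball d x 1 \<subseteq> {y\<in>Rd d. edist d c y > r}} \<le> k - m"
      using Sc by linarith
    hence "real (card {x\<in>Q. eball d x 1 \<subseteq> {y\<in>Rd d. edist d c y > r}}) \<le> real (k - m)"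
      by linarith
    also have "\<dots> = real k - real m" using mlek by simp
    finally have "real (card {x\<in>Q. eball d x 1 \<subseteq> {y\<in>Rd d. edist d c y > r}}) \<le> real k - real m" .
    also have "\<dots> \<le> real k - real k / (2*B)" using m1 by simp
    also have "\<dots> \<le> (1 - 1/K) * real k"
    proof -
      have "real k / K \<le> real k / (2*B)" using KB B1 by (intro divide_left_mono) auto
      thus ?thesis by (simp add: algebra_simps)
    qed
    finally show ?thesis .
  qed
  have cI: "real (card {x\<in>Q. eball d x 1 \<inter> esphere d c r \<noteq> {}}) \<le> real M / J"
  proof -
    have "card {x\<in>Q. eball d x 1 \<inter> esphere d c r \<noteq> {}} \<le> card H"
      using Isub finQ by (intro card_mono) (auto simp: H_def)
    thus ?thesis using HJ by linarith
  qed
  have Mk: "real M \<le> real k" using Mk2 by simp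
  have hit: "real (card {x\<in>Q. eball d x 1 \<inter> esphere d c r \<noteq> {}})
        \<le> (if \<delta> > 1 then (2 * (2 * B * \<bar>c0\<bar>) powr (1/\<delta>)) * real k powr (1 - 1/\<delta>)
            else 4 * \<bar>c0\<bar>)"
  proof (cases "\<delta> > 1")
    case True
    define \<rho> where "\<rho> = max r0 4"
    have \<rho>4: "\<rho> \<ge> 4" by (simp add: \<rho>_def)
    have "card (S c r0) \<le> card (S c \<rho>)"
      using finS by (intro card_mono) (auto simp: S_def \<rho>_def)
    moreover have "real (card (S c \<rho>)) \<le> c0 * (\<rho>/2) powr \<delta>"
      using frac_use[OF fd finP PR QP sep2 cR \<rho>4] by (simp add: S_def)
    ultimately have mc: "real m \<le> c0 * (\<rho>/2) powr \<delta>" using Sc by linarith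
    have pw: "(\<rho>/2) powr \<delta> > 0" using \<rho>4 by simp
    have c0pos: "c0 > 0"
    proof (rule ccontr)
      assume "\<not> c0 > 0"
      hence "c0 * (\<rho>/2) powr \<delta> \<le> 0" using pw by (simp add: mult_nonpos_nonneg)
      thus False using mc mge2 by linarith
    qed
    have JR: "J \<ge> \<rho>/4"
      using J1 J3 r02 by (auto simp: \<rho>_def max_def)
    have kpos: "real k > 0" using kK' Kpos by linarith
    define a where "a = real k / (2*B*c0)"
    have apos: "a > 0" using kpos c0pos B1 by (simp add: a_def)
    have "a \<le> real m / c0"
    proof -
      have "a = (real k / (2*B)) / c0" by (simp add: a_def)
      also have "\<dots> \<le> real m / c0" using m1 c0pos by (intro divide_right_mono) auto
      finally show ?thesis .
    qed
    also have "real m / c0 \<le> (\<rho>/2) powr \<delta>" using mc c0pos by (simp add: divide_le_eq mult.commute)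
    finally have ale: "a \<le> (\<rho>/2) powr \<delta>" .
    have "a powr (1/\<delta>) \<le> ((\<rho>/2) powr \<delta>) powr (1/\<delta>)"
      using ale apos dpos by (intro powr_mono2) auto
    also have "\<dots> = \<rho>/2" using dpos \<rho>4 by (simp add: powr_powr)
    finally have a1: "a powr (1/\<delta>) \<le> \<rho>/2" .
    have apw: "a powr (1/\<delta>) > 0" using apos by simp
    have "real M / J \<le> real k / (\<rho>/4)"
      using Mk kpos JR \<rho>4 by (intro frac_le) auto
    also have "\<dots> = 2 * real k / (\<rho>/2)" by simp
    also have "\<dots> \<le> 2 * real k / a powr (1/\<delta>)"
      using a1 apw kpos \<rho>4 by (intro divide_left_mono) (auto intro!: mult_pos_pos)
    also have "\<dots> = 2 * (2*B*c0) powr (1/\<delta>) * real k powr (1 - 1/\<delta>)"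
    proof -
      have e1: "a powr (1/\<delta>) = real k powr (1/\<delta>) / (2*B*c0) powr (1/\<delta>)"
        unfolding a_def using kpos c0pos B1 by (intro powr_divide)
      have e2: "real k powr (1 - 1/\<delta>) = real k / real k powr (1/\<delta>)"
        using kpos by (simp add: powr_diff)
      have p1: "real k powr (1/\<delta>) > 0" "(2*B*c0) powr (1/\<delta>) > 0" using kpos c0pos B1 by auto
      show ?thesis unfolding e1 e2 using p1 by (simp add: field_simps)
    qed
    finally show ?thesis using cI True c0pos by simp
  next
    case False
    have R4: "R \<ge> 4" using r02 by (simp add: R_def)
    have fu: "real M \<le> c0 * (R/2) powr \<delta>"
      using frac_use[OF fd finP PR QP sep2 cR R4] by (simp add: S_def M_def)
    have "c \<in> S c R" using c r02 by (simp add: S_def R_def)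
    hence "M \<ge> 1" unfolding M_def using finS by (metis One_nat_def Suc_leI card_gt_0_iff empty_iff)
    have pw: "(R/2) powr \<delta> > 0" using R4 by simp
    have c0pos: "c0 > 0"
    proof (rule ccontr)
      assume "\<not> c0 > 0"
      hence "c0 * (R/2) powr \<delta> \<le> 0" using pw by (simp add: mult_nonpos_nonneg)
      thus False using fu \<open>M \<ge> 1\<close> by linarith
    qed
    have "(R/2) powr \<delta> \<le> (R/2) powr 1"
      using False R4 by (intro powr_mono) auto
    also have "\<dots> = R/2" using R4 by simp
    finally have "c0 * (R/2) powr \<delta> \<le> c0 * (R/2)" using c0pos by simp
    hence "real M \<le> c0 * (R/2)" using fu by linarith
    also have "\<dots> \<le> c0 * (4 * J)"
      using J3 r02 c0pos by (intro mult_left_mono) (auto simp: R_def)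
    finally have "real M / J \<le> 4 * c0" using J1 by (simp add: divide_le_eq mult_ac)
    thus ?thesis using cI False c0pos by simp
  qed
  show ?thesis
    using cR r r02 hit cIn cOut by (intro bexI[of _ c] exI[of _ r]) (auto simp: k_def K_def B_def)
qed

theorem theorem11:
  shows "\<exists>A>0. \<forall>d::nat. \<forall>\<delta>::real. \<forall>c0::real.
    d \<ge> 2 \<longrightarrow> 0 < \<delta> \<longrightarrow> \<delta> \<le> real d \<longrightarrow>
    (\<exists>C>0. \<forall>P Q.
       finite P \<longrightarrow> P \<subseteq> Rd d \<longrightarrow> frac_dim_bound d \<delta> c0 P \<longrightarrow>
       Q \<subseteq> P \<longrightarrow>
       (\<forall>x\<in>Q. \<forall>y\<in>Q. x \<noteq> y \<longrightarrow> eball d x 1 \<inter> eball d y 1 = {}) \<longrightarrow>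
       (\<exists>c\<in>Rd d. \<exists>r>0.
          real (card {x\<in>Q. eball d x 1 \<inter> esphere d c r \<noteq> {}})
            \<le> (if \<delta> > 1 then C * real (card Q) powr (1 - 1 / \<delta>) else C) \<and>
          real (card {x\<in>Q. eball d x 1 \<subseteq> {y\<in>Rd d. edist d c y < r}})
            \<le> (1 - 2 powr (- A * real d)) * real (card Q) \<and>
          real (card {x\<in>Q. eball d x 1 \<subseteq> {y\<in>Rd d. edist d c y > r}})
            \<le> (1 - 2 powr (- A * real d)) * real (card Q)))"
proof -
  have two_pow: "(2::real) powr (- 6 * real d) = 1 / 64^d" for d :: nat
  proof -
    have "(2::real) powr (6 * real d) = 2 powr (real (6*d))" by simp
    also have "\<dots> = 2 ^ (6*d)" by (rule powr_realpow) simp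
    also have "\<dots> = 64^d" by (simp add: power_mult)
    finally have h: "(2::real) powr (6 * real d) = 64^d" .
    have "(2::real) powr (- 6 * real d) = 2 powr (- (6 * real d))" by simp
    also have "\<dots> = 1 / 64^d" by (simp add: powr_minus h divide_inverse)
    finally show ?thesis .
  qed
  have main: "\<exists>C>0. \<forall>P Q.
       finite P \<longrightarrow> P \<subseteq> Rd d \<longrightarrow> frac_dim_bound d \<delta> c0 P \<longrightarrow>
       Q \<subseteq> P \<longrightarrow>
       (\<forall>x\<in>Q. \<forall>y\<in>Q. x \<noteq> y \<longrightarrow> eball d x 1 \<inter> eball d y 1 = {}) \<longrightarrow>
       (\<exists>c\<in>Rd d. \<exists>r>0.
          real (card {x\<in>Q. eball d x 1 \<inter> esphere d c r \<noteq> {}})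
            \<le> (if \<delta> > 1 then C * real (card Q) powr (1 - 1 / \<delta>) else C) \<and>
          real (card {x\<in>Q. eball d x 1 \<subseteq> {y\<in>Rd d. edist d c y < r}})
            \<le> (1 - 1 / 64^d) * real (card Q) \<and>
          real (card {x\<in>Q. eball d x 1 \<subseteq> {y\<in>Rd d. edist d c y > r}})
            \<le> (1 - 1 / 64^d) * real (card Q))"
    if d2: "d \<ge> 2" and dpos: "0 < \<delta>" for d :: nat and \<delta> c0 :: real
  proof -
    define K :: real where "K = 64^d"
    define D :: real where "D = 2 * (2 * 16^d * \<bar>c0\<bar>) powr (1/\<delta>)"
    define C where "C = K + D + 4 * \<bar>c0\<bar>"
    have Kpos: "K > 0" by (simp add: K_def)
    have D0: "D \<ge> 0" by (simp add: D_def)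
    have Cpos: "C > 0" using Kpos D0 by (simp add: C_def)
    show ?thesis
    proof (intro exI[of _ C] conjI allI impI)
      show "C > 0" by fact
      fix P Q :: "(nat \<Rightarrow> real) set"
      assume finP: "finite P" and PR: "P \<subseteq> Rd d" and fd: "frac_dim_bound d \<delta> c0 P"
        and QP: "Q \<subseteq> P" and dj: "\<forall>x\<in>Q. \<forall>y\<in>Q. x \<noteq> y \<longrightarrow> eball d x 1 \<inter> eball d y 1 = {}"
      have finQ: "finite Q" using finP QP by (rule finite_subset[rotated])
      have QR: "Q \<subseteq> Rd d" using QP PR by blast
      have sep: "\<forall>x\<in>Q. \<forall>y\<in>Q. x \<noteq> y \<longrightarrow> edist d x y > 2"
        using dj QR disjoint_far by blast
      show "\<exists>c\<in>Rd d. \<exists>r>0.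
          real (card {x\<in>Q. eball d x 1 \<inter> esphere d c r \<noteq> {}})
            \<le> (if \<delta> > 1 then C * real (card Q) powr (1 - 1 / \<delta>) else C) \<and>
          real (card {x\<in>Q. eball d x 1 \<subseteq> {y\<in>Rd d. edist d c y < r}})
            \<le> (1 - 1 / 64^d) * real (card Q) \<and>
          real (card {x\<in>Q. eball d x 1 \<subseteq> {y\<in>Rd d. edist d c y > r}})
            \<le> (1 - 1 / 64^d) * real (card Q)"
      proof (cases "Q = {}")
        case True
        have z: "(\<lambda>_. 0::real) \<in> Rd d" by (simp add: Rd_def)
        show ?thesis using Cpos True by (intro bexI[OF _ z] exI[of _ 1]) auto
      next
        case Qne: False
        show ?thesis
        proof (cases "real (card Q) \<le> K")
          case True
          obtain q where q: "q \<in> Q" using Qne by auto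
          obtain c r where cr: "c \<in> Rd d" "r > 0"
            "card {x\<in>Q. eball d x 1 \<inter> esphere d c r \<noteq> {}} \<le> card Q"
            "card {x\<in>Q. eball d x 1 \<subseteq> {y\<in>Rd d. edist d c y < r}} \<le> card Q - 1"
            "card {x\<in>Q. eball d x 1 \<subseteq> {y\<in>Rd d. edist d c y > r}} \<le> card Q - 1"
            using small_case[OF finQ QR _ q] d2 by auto
          have k1: "card Q \<ge> 1" using finQ Qne by (simp add: Suc_leI card_gt_0_iff)
          have frac: "real (card Q - 1) \<le> (1 - 1/64^d) * real (card Q)"
          proof -
            have "real (card Q) / K \<le> 1" using True Kpos by simp
            hence "real (card Q) - 1 \<le> real (card Q) - real (card Q) / K" by linarith
            thus ?thesis using k1 by (simp add: K_def algebra_simps of_nat_diff)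
          qed
          have hit: "real (card {x\<in>Q. eball d x 1 \<inter> esphere d c r \<noteq> {}}) \<le> C"
          proof -
            have "real (card {x\<in>Q. eball d x 1 \<inter> esphere d c r \<noteq> {}}) \<le> K"
              using cr(3) True by linarith
            thus ?thesis using D0 by (simp add: C_def)
          qed
          have hit2: "C \<le> C * real (card Q) powr (1 - 1 / \<delta>)" if "\<delta> > 1"
          proof -
            have "1 \<le> real (card Q) powr (1 - 1 / \<delta>)"
              using k1 that by (intro ge_one_powr_ge_zero) (auto simp: field_simps)
            thus ?thesis using Cpos by simp
          qed
          have i2: "real (card {x\<in>Q. eball d x 1 \<subseteq> {y\<in>Rd d. edist d c y < r}}) \<le> (1 - 1/64^d) * real (card Q)"
            using cr(4) frac by (meson of_nat_le_iff order_trans)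
          have i3: "real (card {x\<in>Q. eball d x 1 \<subseteq> {y\<in>Rd d. edist d c y > r}}) \<le> (1 - 1/64^d) * real (card Q)"
            using cr(5) frac by (meson of_nat_le_iff order_trans)
          show ?thesis using cr(1,2) hit hit2 i2 i3
            by (intro bexI[of _ c] exI[of _ r]) (auto simp: order_trans)
        next
          case False
          have bc: "\<exists>c\<in>Rd d. \<exists>r>0.
            real (card {x\<in>Q. eball d x 1 \<inter> esphere d c r \<noteq> {}})
              \<le> (if \<delta> > 1 then D * real (card Q) powr (1 - 1/\<delta>) else 4 * \<bar>c0\<bar>) \<and>
            real (card {x\<in>Q. eball d x 1 \<subseteq> {y\<in>Rd d. edist d c y < r}}) \<le> (1 - 1/64^d) * real (card Q) \<and>
            real (card {x\<in>Q. eball d x 1 \<subseteq> {y\<in>Rd d. edist d c y > r}}) \<le> (1 - 1/64^d) * real (card Q)"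
            unfolding D_def using big_case[OF d2 dpos finP PR fd QP sep] False by (simp add: K_def)
          then obtain c r where cr: "c \<in> Rd d" "r > 0"
            "real (card {x\<in>Q. eball d x 1 \<inter> esphere d c r \<noteq> {}})
              \<le> (if \<delta> > 1 then D * real (card Q) powr (1 - 1/\<delta>) else 4 * \<bar>c0\<bar>)"
            "real (card {x\<in>Q. eball d x 1 \<subseteq> {y\<in>Rd d. edist d c y < r}}) \<le> (1 - 1/64^d) * real (card Q)"
            "real (card {x\<in>Q. eball d x 1 \<subseteq> {y\<in>Rd d. edist d c y > r}}) \<le> (1 - 1/64^d) * real (card Q)"
            by blast
          have "D \<le> C" "4 * \<bar>c0\<bar> \<le> C" using Kpos D0 by (auto simp: C_def)
          hence hit: "real (card {x\<in>Q. eball d x 1 \<inter> esphere d c r \<noteq> {}})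
              \<le> (if \<delta> > 1 then C * real (card Q) powr (1 - 1/\<delta>) else C)"
          proof (cases "\<delta> > 1")
            case True
            have "D * real (card Q) powr (1 - 1/\<delta>) \<le> C * real (card Q) powr (1 - 1/\<delta>)"
              using \<open>D \<le> C\<close> by (intro mult_right_mono) auto
            thus ?thesis using cr(3) True by simp
          next
            case False
            thus ?thesis using cr(3) \<open>4 * \<bar>c0\<bar> \<le> C\<close> by simp
          qed
          show ?thesis using cr(1,2,4,5) hit by (intro bexI[of _ c] exI[of _ r]) auto
        qed
      qed
    qed
  qed
  show ?thesis
  proof (rule exI[of _ "6::real"], intro conjI allI impI)
    show "(0::real) < 6" by simp
  next
    fix d :: nat and \<delta> c0 :: real
    assume a: "2 \<le> d" "0 < \<delta>" "\<delta> \<le> real d"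
    show "\<exists>C>0. \<forall>P Q.
       finite P \<longrightarrow> P \<subseteq> Rd d \<longrightarrow> frac_dim_bound d \<delta> c0 P \<longrightarrow>
       Q \<subseteq> P \<longrightarrow>
       (\<forall>x\<in>Q. \<forall>y\<in>Q. x \<noteq> y \<longrightarrow> eball d x 1 \<inter> eball d y 1 = {}) \<longrightarrow>
       (\<exists>c\<in>Rd d. \<exists>r>0.
          real (card {x\<in>Q. eball d x 1 \<inter> esphere d c r \<noteq> {}})
            \<le> (if \<delta> > 1 then C * real (card Q) powr (1 - 1 / \<delta>) else C) \<and>
          real (card {x\<in>Q. eball d x 1 \<subseteq> {y\<in>Rd d. edist d c y < r}})
            \<le> (1 - 2 powr (- 6 * real d)) * real (card Q) \<and>
          real (card {x\<in>Q. eball d x 1 \<subseteq> {y\<in>Rd d. edist d c y > r}})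
            \<le> (1 - 2 powr (- 6 * real d)) * real (card Q))"
      unfolding two_pow by (rule main[OF a(1,2)])
  qed
qed


end
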